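(* Let $x_i,y_i\in K_i$ for each $1\le i\le N$. Then: (i) $\lim_{m\to-\infty}d\big(Y^{x_1\dots x_N}_{m0}(\sigma),Y^{y_1\dots y_N}_{m0}(\sigma)\big)=0$ for all $\sigma$ outside a set of $P_{x_1\dots x_N}$-outer measure zero; (ii) the limit $F_{x_1\dots x_N}(\sigma):=\lim_{m\to-\infty}Y^{x_1\dots x_N}_{m0}(\sigma)$ exists for all $\sigma$ outside a set of $P_{x_1\dots x_N}$-outer measure zero, and $F_{x_1\dots x_N}=F_{y_1\dots y_N}$ outside a set of $P_{x_1\dots x_N}$-outer measure zero; (iii) there exist closed subsets $Q_1\subset Q_2\subset\cdots\subset\Sigma$ with $\sum_{k=1}^\infty P_{x_1\dots x_N}(\Sigma\setminus Q_k)<\infty$, and constants $\alpha,C>0$, such that for every $k$ there exists $\delta_k>0$ with: $F_{x_1\dots x_N}$ is defined on $Q_k$ and for all $\sigma,\sigma'\in Q_k$ with $d'(\sigma,\sigma')\le\delta_k$, $d(F_{x_1\dots x_N}(\sigma),F_{x_1\dots x_N}(\sigma'))\le C\,d'(\sigma,\sigma')^\alpha$.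
   Context: A contractive Markov system (CMS) with average contracting rate $0<a<1$ consists of: a finite directed multigraph $(V,E,i,t)$ with vertex set $V=\{1,\dots,N\}$, finite edge set $E$, and maps $i,t:E\to V$ giving the initial and terminal vertex of each edge; a complete metric space $(K,d)$ partitioned into non-empty Borel sets $K_1,\dots,K_N$; Borel measurable maps $w_e:K\to K$ ($e\in E$) with $w_e(K_{i(e)})\subset K_{t(e)}$; Borel measurable functions $p_e:K\to[0,\infty)$ with $\sum_{e\in E}p_e(x)=1$ for all $x\in K$ and $p_e=0$ on $K\setminus K_{i(e)}$; and such that $\sum_{e\in E}p_e(x)d(w_ex,w_ey)\leq a\,d(x,y)$ for all $x,y\in K_j$, $j=1,\dots,N$. No further conditions are imposed on the graph. Let $\Sigma:=E^{\mathbb{Z}}$ with metric $d'(\sigma,\sigma'):=(1/2)^k$ where $k$ is the largest integer with $\sigma_j=\sigma'_j$ for all $|j|<k$. For $m\le n$ the cylinder $_m[e_m,\dots,e_n]:=\{\sigma\in\Sigma:\sigma_j=e_j,\ m\le j\le n\}$. For an integer $m\le 1$, $\mathcal{A}_m$ is the $\sigma$-algebra generated by the cylinders $_m[e_m,\dots,e_n]$, $n\ge m$. For $x\in K$, $P^m_x$ is the probability measure on $(\Sigma,\mathcal{A}_m)$ with $P^m_x(_m[e_m,\dots,e_n])=p_{e_m}(x)\,p_{e_{m+1}}(w_{e_m}x)\cdots p_{e_n}(w_{e_{n-1}}\circ\cdots\circ w_{e_m}x)$. For a Borel probability measure $\nu$ on $K$, $\Phi_m(\nu)(A)=\int P^m_x(A)\,d\nu(x)$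 for $A\in\mathcal{A}_m$. For $B\subset\Sigma$ let $\mathcal{C}(B)$ be the set of sequences $(A_m)_{m\le 0}$ with $A_m\in\mathcal{A}_m$ and $B\subset\bigcup_{m\le 0}A_m$, and $\Phi(\nu)(B):=\inf\{\sum_{m\le 0}\Phi_m(\nu)(A_m):(A_m)_{m\le0}\in\mathcal{C}(B)\}$ (an outer measure on $\Sigma$). Fix $x_i\in K_i$, $i=1,\dots,N$, and set $P^m_{x_1\dots x_N}:=\Phi_m\big(\frac1N\sum_{i=1}^N\delta_{x_i}\big)$ and $P_{x_1\dots x_N}:=\Phi\big(\frac1N\sum_{i=1}^N\delta_{x_i}\big)$, where $\delta_x$ is the Dirac measure at $x$. For $m\le 0$ and $n\ge m$ define $Y^{x_1\dots x_N}_{mn}:\Sigma\to K$ by $Y^{x_1\dots x_N}_{mn}(\sigma):=w_{\sigma_n}\circ w_{\sigma_{n-1}}\circ\cdots\circ w_{\sigma_m}(x_{i(\sigma_m)})$. *)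

theory Defs
  imports "HOL-Probability.Probability"
begin

text \<open>Vertices: finite type 'v (so N = CARD('v)),
  edges: finite type 'e, state space: complete metric space 'a (K = UNIV).
  iv, tv: initial / terminal vertex maps; K v: the partition sets.\<close>

definition cms ::
  "('e::finite \<Rightarrow> 'v::finite) \<Rightarrow> ('e \<Rightarrow> 'v) \<Rightarrow> ('v \<Rightarrow> 'a::complete_space set)
   \<Rightarrow> ('e \<Rightarrow> 'a \<Rightarrow> 'a) \<Rightarrow> ('e \<Rightarrow> 'a \<Rightarrow> real) \<Rightarrow> real \<Rightarrow> bool" where
  "cms iv tv K w p a \<longleftrightarrow>
     0 < a \<and> a < 1 \<and>
     (\<forall>v. K v \<noteq> {} \<and> K v \<in> sets borel) \<and>
     (\<forall>u v. u \<noteq> v \<longrightarrow> K u \<inter> K v = {}) \<and> (\<Union>v. K v) = UNIV \<and>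
     (\<forall>e. w e \<in> borel \<rightarrow>\<^sub>M borel) \<and> (\<forall>e. w e ` K (iv e) \<subseteq> K (tv e)) \<and>
     (\<forall>e. p e \<in> borel_measurable borel) \<and> (\<forall>e x. 0 \<le> p e x) \<and>
     (\<forall>x. (\<Sum>e\<in>UNIV. p e x) = 1) \<and> (\<forall>e x. x \<notin> K (iv e) \<longrightarrow> p e x = 0) \<and>
     (\<forall>v x y. x \<in> K v \<longrightarrow> y \<in> K v \<longrightarrow>
        (\<Sum>e\<in>UNIV. p e x * dist (w e x) (w e y)) \<le> a * dist x y)"

definition dS :: "(int \<Rightarrow> 'e) \<Rightarrow> (int \<Rightarrow> 'e) \<Rightarrow> real" where
  "dS \<sigma> \<sigma>' = (if \<sigma> = \<sigma>' then 0
     else (1/2) ^ (LEAST k::nat. \<exists>j. \<bar>j\<bar> \<le> int k \<and> \<sigma> j \<noteq> \<sigma>' j))"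

definition dS_closed :: "(int \<Rightarrow> 'e) set \<Rightarrow> bool" where
  "dS_closed Q \<longleftrightarrow> (\<forall>\<sigma>. (\<forall>\<epsilon>>0. \<exists>\<tau>\<in>Q. dS \<sigma> \<tau> < \<epsilon>) \<longrightarrow> \<sigma> \<in> Q)"

definition cyl :: "int \<Rightarrow> 'e list \<Rightarrow> (int \<Rightarrow> 'e) set" where
  "cyl m es = {\<sigma>. \<forall>k < length es. \<sigma> (m + int k) = es ! k}"

definition Alg :: "int \<Rightarrow> (int \<Rightarrow> 'e) set set" where
  "Alg m = sigma_sets UNIV {cyl m es | es. es \<noteq> []}"

fun path_prob :: "('e \<Rightarrow> 'a \<Rightarrow> real) \<Rightarrow> ('e \<Rightarrow> 'a \<Rightarrow> 'a) \<Rightarrow> 'a \<Rightarrow> 'e list \<Rightarrow> real" where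
  "path_prob p w x [] = 1"
| "path_prob p w x (e # es) = p e x * path_prob p w (w e x) es"

definition Pm :: "('e \<Rightarrow> 'a \<Rightarrow> real) \<Rightarrow> ('e \<Rightarrow> 'a \<Rightarrow> 'a) \<Rightarrow> int \<Rightarrow> 'a \<Rightarrow> (int \<Rightarrow> 'e) measure" where
  "Pm p w m x = (THE \<mu>. space \<mu> = UNIV \<and> sets \<mu> = Alg m \<and>
      (\<forall>es. es \<noteq> [] \<longrightarrow> emeasure \<mu> (cyl m es) = ennreal (path_prob p w x es)))"

definition PmN :: "('e \<Rightarrow> 'a \<Rightarrow> real) \<Rightarrow> ('e \<Rightarrow> 'a \<Rightarrow> 'a) \<Rightarrow> ('v::finite \<Rightarrow> 'a) \<Rightarrow> int
     \<Rightarrow> (int \<Rightarrow> 'e) set \<Rightarrow> ennreal" where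
  "PmN p w xs m A = (\<Sum>v\<in>UNIV. emeasure (Pm p w m (xs v)) A) / of_nat CARD('v)"

text \<open>Outer measure P_{x_1...x_N} = Phi((1/N) sum_i delta_{x_i}); index m = -k, k::nat.\<close>
definition Pouter :: "('e \<Rightarrow> 'a \<Rightarrow> real) \<Rightarrow> ('e \<Rightarrow> 'a \<Rightarrow> 'a) \<Rightarrow> ('v::finite \<Rightarrow> 'a)
     \<Rightarrow> (int \<Rightarrow> 'e) set \<Rightarrow> ennreal" where
  "Pouter p w xs B = (INF A \<in> {A. (\<forall>k::nat. A k \<in> Alg (- int k)) \<and> B \<subseteq> (\<Union>k. A k)}.
       \<Sum>k. PmN p w xs (- int k) (A k))"

definition Y :: "('e \<Rightarrow> 'a \<Rightarrow> 'a) \<Rightarrow> ('e \<Rightarrow> 'v) \<Rightarrow> ('v \<Rightarrow> 'a) \<Rightarrow> int \<Rightarrow> int \<Rightarrow> (int \<Rightarrow> 'e) \<Rightarrow> 'a" where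
  "Y w iv xs m n \<sigma> = foldl (\<lambda>z j. w (\<sigma> j) z) (xs (iv (\<sigma> m))) [m..n]"

end

theory Submission
  imports Defs
begin


locale pr =
  fixes p :: "'e::finite \<Rightarrow> 'a \<Rightarrow> real" and w :: "'e \<Rightarrow> 'a \<Rightarrow> 'a"
  assumes nn: "\<And>e x. 0 \<le> p e x" and s1: "\<And>x. (\<Sum>e\<in>UNIV. p e x) = 1"
begin

definition cc :: "'a \<Rightarrow> 'e \<Rightarrow> real" where
  "cc x e = (\<Sum>e'\<in>{e'. to_nat e' < to_nat e}. p e' x)"

definition ch :: "'a \<Rightarrow> real \<Rightarrow> 'e" where
  "ch x u = (THE e. cc x e \<le> u \<and> u < cc x e + p e x)"

lemma cc_nn: "0 \<le> cc x e"
  unfolding cc_def by (rule sum_nonneg) (simp add: nn)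

lemma cc_plus: "cc x e + p e x = (\<Sum>e'\<in>{e'. to_nat e' \<le> to_nat e}. p e' x)"
proof -
  have "{e'. to_nat e' \<le> to_nat e} = insert e {e'. to_nat e' < to_nat e}"
    by (auto simp: order_le_less)
  then show ?thesis unfolding cc_def by simp
qed

lemma cc_plus_le1: "cc x e + p e x \<le> 1"
proof -
  have "(\<Sum>e'\<in>{e'. to_nat e' \<le> to_nat e}. p e' x) \<le> (\<Sum>e'\<in>UNIV. p e' x)"
    by (rule sum_mono2) (auto simp: nn)
  then show ?thesis using cc_plus s1 by simp
qed

lemma cc_mono: "to_nat e1 < to_nat e2 \<Longrightarrow> cc x e1 + p e1 x \<le> cc x e2"
  unfolding cc_plus unfolding cc_def
  by (rule sum_mono2) (auto simp: nn)

lemma ch_ex1: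
  assumes u0: "0 \<le> u" and u1: "u < 1"
  shows "\<exists>!e. cc x e \<le> u \<and> u < cc x e + p e x"
proof -
  define S where "S = {e. cc x e \<le> u}"
  obtain e0 :: 'e where e0: "\<forall>e::'e. to_nat e0 \<le> to_nat e"
    using ex_has_least_nat[of "\<lambda>e. True" "undefined :: 'e" to_nat] by auto
  have "cc x e0 = 0" unfolding cc_def
    using e0 by (intro sum.neutral) (auto simp: not_less[symmetric])
  then have "e0 \<in> S" using u0 by (simp add: S_def)
  have fin: "finite (to_nat ` S)" by simp
  define t where "t = Max (to_nat ` S)"
  have "t \<in> to_nat ` S" unfolding t_def using \<open>e0 \<in> S\<close> fin by (intro Max_in) auto
  then obtain es where es: "es \<in> S" "to_nat es = t" by auto
  have tmax: "\<And>e. e \<in> S \<Longrightarrow> to_nat e \<le> t" unfolding t_def using fin by auto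
  have "u < cc x es + p es x"
  proof (rule ccontr)
    assume "\<not> u < cc x es + p es x"
    then have le: "cc x es + p es x \<le> u" by simp
    show False
    proof (cases "\<exists>e::'e. to_nat e > t")
      case False
      then have "{e'::'e. to_nat e' \<le> to_nat es} = UNIV" using es by (auto simp: not_less)
      then have "cc x es + p es x = 1" using cc_plus s1 by simp
      then show False using le u1 by simp
    next
      case True
      then obtain e2 :: 'e where e2: "to_nat e2 > t" "\<forall>y::'e. to_nat y > t \<longrightarrow> to_nat e2 \<le> to_nat y"
        using ex_has_least_nat[of "\<lambda>e. to_nat e > t" _ to_nat] by blast
      have "{e'::'e. to_nat e' < to_nat e2} = {e'. to_nat e' \<le> to_nat es}"
        using e2 es by (auto simp: not_less[symmetric])
      then have "cc x e2 = (\<Sum>e'\<in>{e'. to_nat e' \<le> to_nat es}. p e' x)" unfolding cc_def by simp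
      then have "cc x e2 = cc x es + p es x" using cc_plus by simp
      then have "e2 \<in> S" using le by (simp add: S_def)
      then show False using tmax e2 by fastforce
    qed
  qed
  then have ex: "cc x es \<le> u \<and> u < cc x es + p es x" using es by (simp add: S_def)
  show ?thesis
  proof (rule ex1I[of _ es])
    show "cc x es \<le> u \<and> u < cc x es + p es x" by (rule ex)
  next
    fix e assume e: "cc x e \<le> u \<and> u < cc x e + p e x"
    show "e = es"
    proof (rule ccontr)
      assume ne: "e \<noteq> es"
      then have "to_nat e \<noteq> to_nat es" by simp
      then consider "to_nat e < to_nat es" | "to_nat es < to_nat e" by linarith
      then show False
      proof cases
        case 1 then show False using cc_mono[OF 1, of x] e ex by linarith
      next
        case 2 then show False using cc_mono[OF 2, of x] e ex by linarith
      qed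
    qed
  qed
qed

lemma ch_prop: "0 \<le> u \<Longrightarrow> u < 1 \<Longrightarrow> cc x (ch x u) \<le> u \<and> u < cc x (ch x u) + p (ch x u) x"
  unfolding ch_def by (rule theI') (rule ch_ex1)

lemma ch_uniq: "0 \<le> u \<Longrightarrow> u < 1 \<Longrightarrow> cc x e \<le> u \<Longrightarrow> u < cc x e + p e x \<Longrightarrow> ch x u = e"
  using ch_ex1[of u x] ch_prop[of u x] by blast

fun walk :: "'a \<Rightarrow> real \<Rightarrow> nat \<Rightarrow> 'e list" where
  "walk x u 0 = []"
| "walk x u (Suc n) = ch x u # walk (w (ch x u) x) ((u - cc x (ch x u)) / p (ch x u) x) n"

fun lo :: "'a \<Rightarrow> 'e list \<Rightarrow> real" where
  "lo x [] = 0"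
| "lo x (e # es) = cc x e + p e x * lo (w e x) es"

lemma pp_nn: "0 \<le> path_prob p w x es"
  by (induction es arbitrary: x) (auto simp: nn)

lemma lo_bounds: "0 \<le> lo x es \<and> lo x es + path_prob p w x es \<le> 1"
proof (induction es arbitrary: x)
  case Nil then show ?case by simp
next
  case (Cons e es)
  have a: "0 \<le> lo (w e x) es" "lo (w e x) es + path_prob p w (w e x) es \<le> 1"
    using Cons.IH by auto
  have "0 \<le> cc x e + p e x * lo (w e x) es" using a cc_nn nn by simp
  moreover have "p e x * (lo (w e x) es + path_prob p w (w e x) es) \<le> p e x * 1"
    by (rule mult_left_mono) (use a nn in auto)
  then have "cc x e + p e x * lo (w e x) es + p e x * path_prob p w (w e x) es \<le> 1"
    using cc_plus_le1[of x e] by (simp add: algebra_simps)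
  ultimately show ?case by simp
qed

lemma length_walk[simp]: "length (walk x u n) = n"
  by (induction n arbitrary: x u) auto

lemma take_walk: "take n (walk x u (n + d)) = walk x u n"
  by (induction n arbitrary: x u) auto

lemma walk_iff:
  assumes "0 \<le> u" "u < 1"
  shows "walk x u (length es) = es \<longleftrightarrow> lo x es \<le> u \<and> u < lo x es + path_prob p w x es"
  using assms
proof (induction es arbitrary: x u)
  case Nil then show ?case by simp
next
  case (Cons e es)
  define e' where "e' = ch x u"
  define u' where "u' = (u - cc x e') / p e' x"
  have cp: "cc x e' \<le> u" "u < cc x e' + p e' x" using ch_prop[OF Cons.prems] e'_def by auto
  have q: "0 < p e' x" using cp by linarith
  have u'0: "0 \<le> u'" unfolding u'_def using cp q by simp
  have u'1: "u' < 1" unfolding u'_def using cp q by (simp add: divide_less_eq)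
  have w: "walk x u (length (e # es)) = e' # walk (w e' x) u' (length es)"
    by (simp add: e'_def u'_def)
  show ?case
  proof (cases "e = e'")
    case True
    have "lo (w e x) es \<le> u' \<longleftrightarrow> cc x e + p e x * lo (w e x) es \<le> u"
      unfolding u'_def using q True by (simp add: le_divide_eq algebra_simps)
    moreover have "u' < lo (w e x) es + path_prob p w (w e x) es \<longleftrightarrow>
       u < cc x e + p e x * lo (w e x) es + p e x * path_prob p w (w e x) es"
      unfolding u'_def using q True by (simp add: divide_less_eq algebra_simps)
    ultimately show ?thesis unfolding w using Cons.IH[OF u'0 u'1, of "w e x"] True
      by (simp add: algebra_simps)
  next
    case False
    have "\<not> (cc x e + p e x * lo (w e x) es \<le> u \<and>
            u < cc x e + p e x * lo (w e x) es + p e x * path_prob p w (w e x) es)"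
    proof
      assume h: "cc x e + p e x * lo (w e x) es \<le> u \<and>
            u < cc x e + p e x * lo (w e x) es + p e x * path_prob p w (w e x) es"
      have b: "0 \<le> lo (w e x) es" "lo (w e x) es + path_prob p w (w e x) es \<le> 1"
        using lo_bounds by auto
      have "p e x * (lo (w e x) es + path_prob p w (w e x) es) \<le> p e x * 1"
        by (rule mult_left_mono) (use b nn in auto)
      moreover have "0 \<le> p e x * lo (w e x) es" using b nn by simp
      ultimately have "cc x e \<le> u" "u < cc x e + p e x" using h by (auto simp: algebra_simps)
      then have "ch x u = e" using ch_uniq Cons.prems by blast
      then show False using False e'_def by simp
    qed
    then show ?thesis unfolding w using False by (simp add: algebra_simps)
  qed
qed


definition gm :: "int \<Rightarrow> 'a \<Rightarrow> real \<Rightarrow> (int \<Rightarrow> 'e)" where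
  "gm m x u = (\<lambda>j. if m \<le> j then walk x u (Suc (nat (j - m))) ! nat (j - m) else undefined)"

lemma gm_cyl: "gm m x u \<in> cyl m es \<longleftrightarrow> walk x u (length es) = es"
proof -
  have h: "gm m x u (m + int k) = walk x u (length es) ! k" if "k < length es" for k
  proof -
    have "take (Suc k) (walk x u (Suc k + (length es - Suc k))) = walk x u (Suc k)"
      by (rule take_walk)
    moreover have "Suc k + (length es - Suc k) = length es" using that by simp
    ultimately have "walk x u (Suc k) ! k = walk x u (length es) ! k"
      by (metis lessI nth_take)
    then show ?thesis by (simp add: gm_def)
  qed
  show ?thesis unfolding cyl_def using h by (auto simp: list_eq_iff_nth_eq)
qed

lemma gm_pre: "gm m x -` cyl m es \<inter> {0..<1} = {lo x es..<lo x es + path_prob p w x es}"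
proof -
  have b: "0 \<le> lo x es" "lo x es + path_prob p w x es \<le> 1" using lo_bounds by auto
  show ?thesis using walk_iff gm_cyl b by fastforce
qed

lemma exists_Pm: "\<exists>\<mu>. space \<mu> = UNIV \<and> sets \<mu> = Alg m \<and>
   (\<forall>es. es \<noteq> [] \<longrightarrow> emeasure \<mu> (cyl m es) = ennreal (path_prob p w x es))"
proof -
  let ?G = "{cyl m es | es::'e list. es \<noteq> []}"
  let ?M = "sigma (UNIV::(int\<Rightarrow>'e) set) ?G"
  let ?L = "restrict_space lborel {0..<1::real}"
  have spL: "space ?L = {0..<1}" by (simp add: space_restrict_space)
  have meas: "gm m x \<in> measurable ?L ?M"
  proof (rule measurable_measure_of)
    show "?G \<subseteq> Pow UNIV" by simp
    show "gm m x \<in> space ?L \<rightarrow> UNIV" by simp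
    fix A assume "A \<in> ?G"
    then obtain es where A: "A = cyl m es" by auto
    have iv: "{lo x es..<lo x es + path_prob p w x es} \<subseteq> {0..<1}"
      using lo_bounds[of x es] by auto
    have "gm m x -` A \<inter> space ?L = {0..<1} \<inter> {lo x es..<lo x es + path_prob p w x es}"
      using gm_pre[of m x es] spL A iv by auto
    then show "gm m x -` A \<inter> space ?L \<in> sets ?L" by (auto simp: sets_restrict_space)
  qed
  define \<mu> where "\<mu> = distr ?L ?M (gm m x)"
  have 1: "space \<mu> = UNIV" unfolding \<mu>_def by simp
  have 2: "sets \<mu> = Alg m" unfolding \<mu>_def Alg_def by simp
  have 3: "emeasure \<mu> (cyl m es) = ennreal (path_prob p w x es)" if "es \<noteq> []" for es
  proof -
    have "cyl m es \<in> sets ?M" using that by auto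
    then have "emeasure \<mu> (cyl m es) = emeasure ?L (gm m x -` cyl m es \<inter> space ?L)"
      unfolding \<mu>_def by (rule emeasure_distr[OF meas])
    also have "\<dots> = emeasure ?L {lo x es..<lo x es + path_prob p w x es}" using gm_pre spL by simp
    also have "\<dots> = emeasure lborel {lo x es..<lo x es + path_prob p w x es}"
      by (rule emeasure_restrict_space) (use lo_bounds[of x es] in auto)
    also have "\<dots> = ennreal (path_prob p w x es)" using pp_nn[of x es] by simp
    finally show ?thesis .
  qed
  show ?thesis by (rule exI[of _ \<mu>]) (use 1 2 3 in simp)
qed

lemma cyl_Nil: "cyl m [] = UNIV" by (simp add: cyl_def)

abbreviation CY :: "int \<Rightarrow> (int \<Rightarrow> 'e) set set" where
  "CY m \<equiv> insert {} (range (cyl m :: 'e list \<Rightarrow> (int \<Rightarrow> 'e) set))"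

lemma cyl_Int_le:
  assumes "length es \<le> length fs"
  shows "cyl m es \<inter> cyl m fs \<in> insert {} (range (cyl m))"
proof (cases "take (length es) fs = es")
  case True
  have "cyl m fs \<subseteq> cyl m es"
  proof
    fix \<sigma> assume "\<sigma> \<in> cyl m fs"
    then have "\<forall>k<length fs. \<sigma> (m + int k) = fs ! k" by (simp add: cyl_def)
    then show "\<sigma> \<in> cyl m es" unfolding cyl_def using True assms
      by (auto, metis nth_take order_less_le_trans)
  qed
  then show ?thesis by (simp add: Int_absorb1)
next
  case False
  then obtain k where k: "k < length es" "fs ! k \<noteq> es ! k"
    using assms by (auto simp: list_eq_iff_nth_eq)
  then have "cyl m es \<inter> cyl m fs = {}" unfolding cyl_def using assms by auto
  then show ?thesis by simp
qed

lemma Int_stable_cyl: "Int_stable (CY m)"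
proof (rule Int_stableI)
  fix A B :: "(int \<Rightarrow> 'e) set" assume "A \<in> CY m" "B \<in> CY m"
  then consider "A = {}" | "B = {}" | es fs where "A = cyl m es" "B = cyl m fs" by auto
  then show "A \<inter> B \<in> insert {} (range (cyl m))"
  proof cases
    case 3
    then show ?thesis
    proof (cases "length es \<le> length fs")
      case True then show ?thesis using 3 cyl_Int_le by simp
    next
      case False then show ?thesis using 3 cyl_Int_le[of fs es m] by (simp add: Int_commute)
    qed
  qed auto
qed

lemma sigma_cyl: "sigma_sets UNIV (CY m) = Alg m"
proof
  show "sigma_sets UNIV (insert {} (range (cyl m))) \<subseteq> Alg m"
    unfolding Alg_def
  proof (rule sigma_sets_mono)
    show "insert {} (range (cyl m)) \<subseteq> sigma_sets UNIV {cyl m es |es. es \<noteq> []}"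
    proof
      fix A assume "A \<in> insert {} (range (cyl m))"
      then consider "A = {}" | es where "A = cyl m es" by auto
      then show "A \<in> sigma_sets UNIV {cyl m es |es. es \<noteq> []}"
      proof cases
        case 1 then show ?thesis by (simp add: sigma_sets.Empty)
      next
        case 2
        show ?thesis
        proof (cases "es = []")
          case True then show ?thesis using 2 by (simp add: cyl_Nil sigma_sets_top)
        next
          case False then show ?thesis using 2 by (auto intro: sigma_sets.Basic)
        qed
      qed
    qed
  qed
  show "Alg m \<subseteq> sigma_sets UNIV (insert {} (range (cyl m)))"
    unfolding Alg_def by (rule sigma_sets_mono') auto
qed

lemma emeasure_UNIV1:
  assumes "space \<mu> = UNIV" "sets \<mu> = Alg m"
    "\<forall>es. es \<noteq> [] \<longrightarrow> emeasure \<mu> (cyl m es) = ennreal (path_prob p w x es)"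
  shows "emeasure \<mu> UNIV = 1"
proof -
  have cs: "cyl m [e] \<in> sets \<mu>" for e using assms(2) unfolding Alg_def
    by (auto intro!: sigma_sets.Basic)
  have U: "(\<Union>e\<in>UNIV. cyl m [e]) = UNIV" by (auto simp: cyl_def)
  have "emeasure \<mu> UNIV = emeasure \<mu> (\<Union>e\<in>UNIV. cyl m [e])" by (simp only: U)
  also have "\<dots> = (\<Sum>e\<in>UNIV. emeasure \<mu> (cyl m [e]))"
    by (rule sum_emeasure[symmetric]) (use cs in \<open>auto simp: disjoint_family_on_def cyl_def\<close>)
  also have "\<dots> = (\<Sum>e\<in>UNIV. ennreal (p e x))"
    using assms(3) by simp
  also have "\<dots> = 1" using s1 nn by simp
  finally show ?thesis .
qed

lemma Pm_unique:
  assumes "space \<mu> = UNIV" "sets \<mu> = Alg m"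
    "\<forall>es. es \<noteq> [] \<longrightarrow> emeasure \<mu> (cyl m es) = ennreal (path_prob p w x es)"
  assumes "space \<nu> = UNIV" "sets \<nu> = Alg m"
    "\<forall>es. es \<noteq> [] \<longrightarrow> emeasure \<nu> (cyl m es) = ennreal (path_prob p w x es)"
  shows "\<mu> = \<nu>"
proof -
  have u1: "emeasure \<mu> UNIV = 1" "emeasure \<nu> UNIV = 1"
    using emeasure_UNIV1[OF assms(1-3)] emeasure_UNIV1[OF assms(4-6)] by auto
  show ?thesis
proof (rule measure_eqI_generator_eq[OF Int_stable_cyl[of m], where \<Omega>=UNIV and A="\<lambda>_. UNIV"])
  fix X assume "X \<in> CY m"
  then consider "X = {}" | es where "X = cyl m es" by auto
  then show "emeasure \<mu> X = emeasure \<nu> X"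
  proof cases
    case 2
    show ?thesis
    proof (cases "es = []")
      case True then show ?thesis using 2 u1 by (simp add: cyl_Nil)
    next
      case False then show ?thesis using 2 assms by simp
    qed
  qed simp
next
  show "sets \<mu> = sigma_sets UNIV (insert {} (range (cyl m)))" using assms sigma_cyl by simp
  show "sets \<nu> = sigma_sets UNIV (insert {} (range (cyl m)))" using assms sigma_cyl by simp
  have "UNIV \<in> CY m" by (metis cyl_Nil rangeI insertI2)
  then show "range (\<lambda>_. UNIV) \<subseteq> CY m" by blast
  show "emeasure \<mu> UNIV \<noteq> \<infinity>" for i :: nat using u1 by simp
  show "CY m \<subseteq> Pow UNIV" by blast
  show "(\<Union>i::nat. UNIV) = UNIV" by blast
qed
qed

lemma Pm_ex1: "\<exists>!\<mu>. space \<mu> = UNIV \<and> sets \<mu> = Alg m \<and>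
   (\<forall>es. es \<noteq> [] \<longrightarrow> emeasure \<mu> (cyl m es) = ennreal (path_prob p w x es))"
  proof -
    obtain \<mu> where \<mu>: "space \<mu> = UNIV" "sets \<mu> = Alg m"
      "\<forall>es. es \<noteq> [] \<longrightarrow> emeasure \<mu> (cyl m es) = ennreal (path_prob p w x es)"
      using exists_Pm[of m x] by blast
    show ?thesis
    proof (rule ex1I[of _ \<mu>])
      show "space \<mu> = UNIV \<and> sets \<mu> = Alg m \<and>
        (\<forall>es. es \<noteq> [] \<longrightarrow> emeasure \<mu> (cyl m es) = ennreal (path_prob p w x es))" using \<mu> by (intro conjI)
    next
      fix \<nu> :: "(int \<Rightarrow> 'e) measure"
      assume h: "space \<nu> = UNIV \<and> sets \<nu> = Alg m \<and>
        (\<forall>es. es \<noteq> [] \<longrightarrow> emeasure \<nu> (cyl m es) = ennreal (path_prob p w x es))"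
      have h1: "space \<nu> = UNIV" using h by (rule conjunct1)
      have h2: "sets \<nu> = Alg m" using h by (elim conjE)
      have h3: "\<forall>es. es \<noteq> [] \<longrightarrow> emeasure \<nu> (cyl m es) = ennreal (path_prob p w x es)"
        using h by (elim conjE)
      show "\<nu> = \<mu>" by (rule Pm_unique[OF h1 h2 h3 \<mu>])
    qed
  qed

lemma Pm_char: "space (Pm p w m x) = UNIV \<and> sets (Pm p w m x) = Alg m \<and>
   (\<forall>es. es \<noteq> [] \<longrightarrow> emeasure (Pm p w m x) (cyl m es) = ennreal (path_prob p w x es))"
  unfolding Pm_def
  by (rule theI'[of "\<lambda>\<mu>. space \<mu> = UNIV \<and> sets \<mu> = Alg m \<and>
   (\<forall>es. es \<noteq> [] \<longrightarrow> emeasure \<mu> (cyl m es) = ennreal (path_prob p w x es))", OF Pm_ex1])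

end


definition lst :: "int \<Rightarrow> nat \<Rightarrow> (int \<Rightarrow> 'e) \<Rightarrow> 'e list" where
  "lst m n \<sigma> = map (\<lambda>i. \<sigma> (m + int i)) [0..<n]"

lemma length_lst[simp]: "length (lst m n \<sigma>) = n" by (simp add: lst_def)

lemma nth_lst: "i < n \<Longrightarrow> lst m n \<sigma> ! i = \<sigma> (m + int i)"
  by (simp add: lst_def)

lemma cyl_lst: "cyl m es = {\<sigma>. lst m (length es) \<sigma> = es}"
proof -
  have "\<sigma> \<in> cyl m es \<longleftrightarrow> lst m (length es) \<sigma> = es" for \<sigma>
  proof -
    have "lst m (length es) \<sigma> = es \<longleftrightarrow> (\<forall>i<length es. lst m (length es) \<sigma> ! i = es ! i)"
      by (simp add: list_eq_iff_nth_eq)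
    also have "\<dots> \<longleftrightarrow> (\<forall>i<length es. \<sigma> (m + int i) = es ! i)"
      by (simp add: nth_lst)
    finally show ?thesis by (simp add: cyl_def)
  qed
  then show ?thesis by blast
qed

lemma ev_union: "\<forall>es\<in>E. length es = n \<Longrightarrow> {\<sigma>. lst m n \<sigma> \<in> E} = (\<Union>es\<in>E. cyl m es)"
  by (auto simp: cyl_lst)

lemma finite_len: "finite {es::'e::finite list. length es = n}"
  using finite_lists_length_eq[of "UNIV::'e set" n] by simp

lemma sum_len_Suc:
  "(\<Sum>es\<in>{es::'e::finite list. length es = Suc n}. f es) = (\<Sum>e\<in>UNIV. \<Sum>es\<in>{es. length es = n}. f (e # es))"
proof -
  have "{es::'e list. length es = Suc n} = (\<lambda>(e, es). e # es) ` (UNIV \<times> {es. length es = n})"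
    by (auto simp: length_Suc_conv image_iff)
  moreover have "inj_on (\<lambda>(e, es). e # es) (UNIV \<times> {es::'e list. length es = n})"
    by (auto simp: inj_on_def)
  ultimately have "(\<Sum>es\<in>{es::'e list. length es = Suc n}. f es) =
      (\<Sum>x\<in>UNIV \<times> {es. length es = n}. f ((\<lambda>(e, es). e # es) x))"
    by (simp add: sum.reindex)
  also have "\<dots> = (\<Sum>e\<in>UNIV. \<Sum>es\<in>{es. length es = n}. f (e # es))"
    by (simp only: sum.cartesian_product) (simp add: case_prod_unfold)
  finally show ?thesis .
qed

lemma upto_map: "[i..i + int n] = map (\<lambda>k. i + int k) [0..<Suc n]"
proof (induction n arbitrary: i)
  case 0 then show ?case by simp
next
  case (Suc n)
  have e: "i + int (Suc n) = (i + 1) + int n" by simp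
  have "[i..i + int (Suc n)] = i # [i + 1..(i + 1) + int n]"
    unfolding e by (rule upto_rec1) simp
  also have "\<dots> = i # map (\<lambda>k. i + 1 + int k) [0..<Suc n]" by (simp only: Suc.IH)
  also have "\<dots> = map (\<lambda>k. i + int k) [0..<Suc (Suc n)]"
    by (simp only: upt_conv_Cons[of 0] map_Suc_upt[symmetric]) (auto simp: algebra_simps)
  finally show ?case .
qed

definition fw :: "('e \<Rightarrow> 'a \<Rightarrow> 'a) \<Rightarrow> 'e list \<Rightarrow> 'a \<Rightarrow> 'a" where
  "fw w es z = foldl (\<lambda>z e. w e z) z es"

lemma fw_simps[simp]: "fw w [] z = z" "fw w (e # es) z = fw w es (w e z)"
  by (simp_all add: fw_def)

definition Yl :: "('e \<Rightarrow> 'a \<Rightarrow> 'a) \<Rightarrow> ('e \<Rightarrow> 'v) \<Rightarrow> ('v \<Rightarrow> 'a) \<Rightarrow> 'e list \<Rightarrow> 'a" where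
  "Yl w iv xs l = fw w l (xs (iv (hd l)))"

lemma Y_lst: "Y w iv xs (- int k) 0 \<sigma> = Yl w iv xs (lst (- int k) (Suc k) \<sigma>)"
proof -
  have u: "[- int k..0] = map (\<lambda>j. - int k + int j) [0..<Suc k]"
  proof -
    have z: "- int k + int k = 0" by simp
    show ?thesis using upto_map[of "- int k" k] unfolding z .
  qed
  have hd: "hd (lst (- int k) (Suc k) \<sigma>) = \<sigma> (- int k)"
    by (simp add: lst_def upt_conv_Cons del: upt_Suc)
  have "Y w iv xs (- int k) 0 \<sigma> = foldl (\<lambda>z j. w (\<sigma> j) z) (xs (iv (\<sigma> (- int k))))
        (map (\<lambda>j. - int k + int j) [0..<Suc k])"
    unfolding Y_def by (simp only: u)
  also have "\<dots> = foldl (\<lambda>z i. w (\<sigma> (- int k + int i)) z) (xs (iv (\<sigma> (- int k)))) [0..<Suc k]"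
    by (simp only: foldl_map)
  also have "\<dots> = fw w (lst (- int k) (Suc k) \<sigma>) (xs (iv (\<sigma> (- int k))))"
    unfolding fw_def lst_def by (simp only: foldl_map)
  also have "\<dots> = Yl w iv xs (lst (- int k) (Suc k) \<sigma>)"
    unfolding Yl_def hd ..
  finally show ?thesis .
qed


lemma lst_drop:
  assumes "k \<le> j" shows "lst (- int k) (Suc k) \<sigma> = drop (j - k) (lst (- int j) (Suc j) \<sigma>)"
proof (rule nth_equalityI)
  show "length (lst (- int k) (Suc k) \<sigma>) = length (drop (j - k) (lst (- int j) (Suc j) \<sigma>))"
    using assms by simp
  fix i assume "i < length (lst (- int k) (Suc k) \<sigma>)"
  then have i: "i < Suc k" by simp
  have "drop (j - k) (lst (- int j) (Suc j) \<sigma>) ! i = lst (- int j) (Suc j) \<sigma> ! (j - k + i)"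
    using assms by (simp add: nth_drop)
  also have "\<dots> = \<sigma> (- int j + int (j - k + i))" using i assms by (intro nth_lst) simp
  also have "\<dots> = \<sigma> (- int k + int i)" using assms by (simp add: algebra_simps)
  also have "\<dots> = lst (- int k) (Suc k) \<sigma> ! i" using i by (simp add: nth_lst)
  finally show "lst (- int k) (Suc k) \<sigma> ! i = drop (j - k) (lst (- int j) (Suc j) \<sigma>) ! i" by simp
qed

lemma lst_tl: "0 < j \<Longrightarrow> lst (- int (j - 1)) (Suc (j - 1)) \<sigma> = tl (lst (- int j) (Suc j) \<sigma>)"
proof -
  assume "0 < j"
  then obtain j' where j: "j = Suc j'" by (cases j) auto
  have e1: "j - j' = Suc 0" "j - 1 = j'" using j by simp_all
  have "lst (- int j') (Suc j') \<sigma> = drop (j - j') (lst (- int j) (Suc j) \<sigma>)"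
    using j by (intro lst_drop) simp
  also have "\<dots> = tl (lst (- int j) (Suc j) \<sigma>)" unfolding e1 drop_Suc drop_0 ..
  finally show ?thesis unfolding e1 .
qed


context pr begin

lemma cyl_Alg: "es \<noteq> [] \<Longrightarrow> cyl m es \<in> Alg m"
  unfolding Alg_def by (rule sigma_sets.Basic) auto

lemma sets_Pm: "sets (Pm p w m x) = Alg m" using Pm_char by blast

lemma cyl_Pm: "es \<noteq> [] \<Longrightarrow> emeasure (Pm p w m x) (cyl m es) = ennreal (path_prob p w x es)"
  using Pm_char by blast

lemma ev_Alg:
  fixes E :: "'e list set"
  assumes n: "0 < n" and E: "\<forall>es\<in>E. length es = n"
  shows "{\<sigma>. lst m n \<sigma> \<in> E} \<in> Alg m"
proof -
  have fin: "finite E" using E by (intro finite_subset[OF _ finite_len[of n]]) auto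
  have "(\<Union>es\<in>E. cyl m es) \<in> sets (Pm p w m undefined)"
  proof (rule sets.finite_UN[OF fin])
    fix es assume "es \<in> E"
    then have "es \<noteq> []" using E n by auto
    then show "cyl m es \<in> sets (Pm p w m undefined)" using cyl_Alg sets_Pm by simp
  qed
  then show ?thesis using ev_union[OF E] sets_Pm by simp
qed

lemma Pm_ev:
  assumes n: "0 < n" and E: "\<forall>es\<in>E. length es = n"
  shows "emeasure (Pm p w m x) {\<sigma>. lst m n \<sigma> \<in> E} = ennreal (\<Sum>es\<in>E. path_prob p w x es)"
proof -
  have fin: "finite E" using E by (intro finite_subset[OF _ finite_len[of n]]) auto
  have disj: "disjoint_family_on (cyl m) E"
    unfolding disjoint_family_on_def using E by (auto simp: cyl_lst)
  have "emeasure (Pm p w m x) {\<sigma>. lst m n \<sigma> \<in> E} = emeasure (Pm p w m x) (\<Union>es\<in>E. cyl m es)"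
    using ev_union[OF E] by simp
  also have "\<dots> = (\<Sum>es\<in>E. emeasure (Pm p w m x) (cyl m es))"
  proof (rule sum_emeasure[symmetric])
    show "cyl m ` E \<subseteq> sets (Pm p w m x)"
    proof
      fix A assume "A \<in> cyl m ` E"
      then obtain es where "es \<in> E" "A = cyl m es" by auto
      then show "A \<in> sets (Pm p w m x)" using E n cyl_Alg[of es m] sets_Pm by auto
    qed
  qed (use disj fin in auto)
  also have "\<dots> = (\<Sum>es\<in>E. ennreal (path_prob p w x es))"
    using E n by (intro sum.cong) (auto simp: cyl_Pm)
  also have "\<dots> = ennreal (\<Sum>es\<in>E. path_prob p w x es)" using pp_nn by simp
  finally show ?thesis .
qed

lemma PmN_ev_le:
  fixes xs :: "'v::finite \<Rightarrow> 'a"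
  assumes n: "0 < n" and E: "\<forall>es\<in>E. length es = n"
    and b: "\<And>v. (\<Sum>es\<in>E. path_prob p w (xs v) es) \<le> b"
  shows "PmN p w xs m {\<sigma>. lst m n \<sigma> \<in> E} \<le> ennreal b"
proof -
  let ?S = "\<lambda>v. (\<Sum>es\<in>E. path_prob p w (xs v) es)"
  have S0: "0 \<le> ?S v" for v using pp_nn by (simp add: sum_nonneg)
  have N: "0 < real CARD('v)" by simp
  have "PmN p w xs m {\<sigma>. lst m n \<sigma> \<in> E} = (\<Sum>v\<in>UNIV. ennreal (?S v)) / of_nat CARD('v)"
    unfolding PmN_def using Pm_ev[OF n E] by simp
  also have "\<dots> = ennreal (\<Sum>v\<in>UNIV. ?S v) / ennreal (real CARD('v))"
    using S0 by (simp add: ennreal_of_nat_eq_real_of_nat)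
  also have "\<dots> = ennreal ((\<Sum>v\<in>UNIV. ?S v) / real CARD('v))"
    using S0 N by (intro divide_ennreal) (auto simp: sum_nonneg)
  also have "\<dots> \<le> ennreal b"
  proof (rule ennreal_leI)
    have "(\<Sum>v\<in>UNIV. ?S v) \<le> (\<Sum>v\<in>(UNIV::'v set). b)" by (rule sum_mono) (rule b)
    then have "(\<Sum>v\<in>UNIV. ?S v) \<le> real CARD('v) * b" by simp
    then show "(\<Sum>v\<in>UNIV. ?S v) / real CARD('v) \<le> b" using N by (simp add: divide_le_eq mult.commute)
  qed
  finally show ?thesis .
qed

end

lemma markov_sum:
  fixes q D :: "'x \<Rightarrow> real"
  assumes "finite S" "T \<subseteq> S" "\<forall>s\<in>S. 0 \<le> q s" "\<forall>s\<in>S. 0 \<le> D s" "0 < t" "\<forall>s\<in>T. t \<le> D s"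
  shows "(\<Sum>s\<in>T. q s) \<le> (\<Sum>s\<in>S. q s * D s) / t"
proof -
  have "(\<Sum>s\<in>T. q s) \<le> (\<Sum>s\<in>T. q s * D s / t)"
  proof (rule sum_mono)
    fix s assume s: "s \<in> T"
    then have "q s * t \<le> q s * D s" using assms by (intro mult_left_mono) auto
    then show "q s \<le> q s * D s / t" using assms by (simp add: le_divide_eq)
  qed
  also have "\<dots> \<le> (\<Sum>s\<in>S. q s * D s / t)"
    using assms by (intro sum_mono2) auto
  also have "\<dots> = (\<Sum>s\<in>S. q s * D s) / t" by (simp add: sum_divide_distrib)
  finally show ?thesis .
qed


locale cmsl =
  fixes iv tv :: "'e::finite \<Rightarrow> 'v::finite" and K :: "'v \<Rightarrow> 'a::complete_space set"
    and w :: "'e \<Rightarrow> 'a \<Rightarrow> 'a" and p :: "'e \<Rightarrow> 'a \<Rightarrow> real" and a :: real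
  assumes C: "cms iv tv K w p a"
begin

lemma a_pos: "0 < a" using C unfolding cms_def by (elim conjE)
lemma a_lt1: "a < 1" using C unfolding cms_def by (elim conjE)
lemma Kdisj: "u \<noteq> v \<Longrightarrow> K u \<inter> K v = {}" using C unfolding cms_def by blast
lemma Kcover: "\<exists>v. z \<in> K v"
proof -
  have "(\<Union>v. K v) = UNIV" using C unfolding cms_def by (elim conjE)
  then have "z \<in> (\<Union>v. K v)" by simp
  then show ?thesis by simp
qed
lemma wK: "x \<in> K (iv e) \<Longrightarrow> w e x \<in> K (tv e)" using C unfolding cms_def by blast
lemma p0: "x \<notin> K (iv e) \<Longrightarrow> p e x = 0" using C unfolding cms_def by blast
lemma contr1: "x \<in> K v \<Longrightarrow> y \<in> K v \<Longrightarrow> (\<Sum>e\<in>UNIV. p e x * dist (w e x) (w e y)) \<le> a * dist x y"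
  using C unfolding cms_def by blast

sublocale pr p w
proof
  show "0 \<le> p e x" for e x using C unfolding cms_def by blast
  show "(\<Sum>e\<in>UNIV. p e x) = 1" for x using C unfolding cms_def by blast
qed

lemma vert:
  assumes "p e x \<noteq> 0" "x \<in> K v" shows "iv e = v"
proof (rule ccontr)
  assume ne: "iv e \<noteq> v"
  have "x \<in> K (iv e)" using p0 assms(1) by blast
  moreover have "K (iv e) \<inter> K v = {}" using ne by (rule Kdisj)
  ultimately show False using assms(2) by blast
qed

lemma contr_sum:
  "x \<in> K v \<Longrightarrow> y \<in> K v \<Longrightarrow>
   (\<Sum>es\<in>{es. length es = n}. path_prob p w x es * dist (fw w es x) (fw w es y)) \<le> a ^ n * dist x y"
proof (induction n arbitrary: x y v)
  case 0
  have "{es::'e list. length es = 0} = {[]}" by auto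
  then show ?case by simp
next
  case (Suc n)
  let ?I = "\<lambda>e. (\<Sum>es\<in>{es. length es = n}. path_prob p w (w e x) es * dist (fw w es (w e x)) (fw w es (w e y)))"
  have "(\<Sum>es\<in>{es. length es = Suc n}. path_prob p w x es * dist (fw w es x) (fw w es y))
      = (\<Sum>e\<in>UNIV. \<Sum>es\<in>{es. length es = n}. p e x * (path_prob p w (w e x) es * dist (fw w es (w e x)) (fw w es (w e y))))"
    by (simp add: sum_len_Suc mult.assoc)
  also have "\<dots> = (\<Sum>e\<in>UNIV. p e x * ?I e)"
    by (simp add: sum_distrib_left)
  also have "\<dots> \<le> (\<Sum>e\<in>UNIV. p e x * (a ^ n * dist (w e x) (w e y)))"
  proof (rule sum_mono)
    fix e
    show "p e x * ?I e \<le> p e x * (a ^ n * dist (w e x) (w e y))"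
    proof (cases "p e x = 0")
      case False
      then have "iv e = v" using vert Suc.prems by blast
      then have "w e x \<in> K (tv e)" "w e y \<in> K (tv e)" using wK Suc.prems by auto
      then have "?I e \<le> a ^ n * dist (w e x) (w e y)" by (rule Suc.IH)
      then show ?thesis by (rule mult_left_mono) (simp add: nn)
    qed simp
  qed
  also have "\<dots> = a ^ n * (\<Sum>e\<in>UNIV. p e x * dist (w e x) (w e y))"
    by (simp add: sum_distrib_left mult.left_commute)
  also have "\<dots> \<le> a ^ n * (a * dist x y)"
    using contr1[OF Suc.prems] a_pos by (intro mult_left_mono) auto
  also have "\<dots> = a ^ Suc n * dist x y" by simp
  finally show ?case .
qed

lemma pp_Cons_nz: "path_prob p w x (e # es) \<noteq> 0 \<Longrightarrow> p e x \<noteq> 0"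
  by simp

lemma bound1:
  assumes xs: "\<And>v. xs v \<in> K v" and ys: "\<And>v. ys v \<in> K v"
  shows "(\<Sum>l\<in>{l. length l = Suc j}. path_prob p w (xs v) l * dist (Yl w iv xs l) (Yl w iv ys l))
     \<le> a ^ Suc j * dist (xs v) (ys v)"
proof -
  have "(\<Sum>l\<in>{l. length l = Suc j}. path_prob p w (xs v) l * dist (Yl w iv xs l) (Yl w iv ys l))
      = (\<Sum>l\<in>{l. length l = Suc j}. path_prob p w (xs v) l * dist (fw w l (xs v)) (fw w l (ys v)))"
  proof (rule sum.cong)
    fix l assume "l \<in> {l::'e list. length l = Suc j}"
    then obtain e l' where l: "l = e # l'" by (cases l) auto
    show "path_prob p w (xs v) l * dist (Yl w iv xs l) (Yl w iv ys l) =
          path_prob p w (xs v) l * dist (fw w l (xs v)) (fw w l (ys v))"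
    proof (cases "path_prob p w (xs v) l = 0")
      case False
      then have "p e (xs v) \<noteq> 0" using l by simp
      then have "iv e = v" using vert xs by blast
      then show ?thesis using l by (simp add: Yl_def)
    qed simp
  qed simp
  also have "\<dots> \<le> a ^ Suc j * dist (xs v) (ys v)" using xs ys by (rule contr_sum)
  finally show ?thesis .
qed

definition M2 :: "('v \<Rightarrow> 'a) \<Rightarrow> real" where
  "M2 xs = (\<Sum>e\<in>UNIV. \<Sum>u\<in>UNIV. \<Sum>u'\<in>UNIV. dist (w e (xs u)) (xs u'))"

lemma M2_nn: "0 \<le> M2 xs" unfolding M2_def by (intro sum_nonneg) auto

lemma M2_ge: "dist (w e (xs u)) (xs u') \<le> M2 xs"
proof -
  have "dist (w e (xs u)) (xs u') \<le> (\<Sum>u'\<in>UNIV. dist (w e (xs u)) (xs u'))"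
    by (rule member_le_sum) auto
  also have "\<dots> \<le> (\<Sum>u\<in>UNIV. \<Sum>u'\<in>UNIV. dist (w e (xs u)) (xs u'))"
    by (rule member_le_sum[of u UNIV "\<lambda>u. \<Sum>u'\<in>UNIV. dist (w e (xs u)) (xs u')"]) (auto intro: sum_nonneg)
  also have "\<dots> \<le> M2 xs" unfolding M2_def
    by (rule member_le_sum[of e UNIV]) (auto intro!: sum_nonneg)
  finally show ?thesis .
qed

lemma bound2:
  assumes xs: "\<And>v. xs v \<in> K v"
  shows "(\<Sum>l\<in>{l. length l = Suc (Suc j)}. path_prob p w (xs v) l * dist (Yl w iv xs l) (Yl w iv xs (tl l)))
     \<le> a ^ Suc j * M2 xs"
proof -
  let ?I = "\<lambda>e. (\<Sum>l\<in>{l. length l = Suc j}. path_prob p w (w e (xs v)) l * dist (Yl w iv xs (e # l)) (Yl w iv xs l))"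
  have "(\<Sum>l\<in>{l. length l = Suc (Suc j)}. path_prob p w (xs v) l * dist (Yl w iv xs l) (Yl w iv xs (tl l)))
      = (\<Sum>e\<in>UNIV. p e (xs v) * ?I e)"
    by (subst sum_len_Suc) (simp add: sum_distrib_left mult.assoc)
  also have "\<dots> \<le> (\<Sum>e\<in>UNIV. p e (xs v) * (a ^ Suc j * M2 xs))"
  proof (rule sum_mono)
    fix e
    show "p e (xs v) * ?I e \<le> p e (xs v) * (a ^ Suc j * M2 xs)"
    proof (cases "p e (xs v) = 0")
      case False
      then have ive: "iv e = v" using vert xs by blast
      define z where "z = w e (xs v)"
      obtain u where u: "z \<in> K u" using Kcover by blast
      have "?I e = (\<Sum>l\<in>{l. length l = Suc j}. path_prob p w z l * dist (fw w l z) (fw w l (xs u)))"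
      proof (rule sum.cong)
        fix l assume "l \<in> {l::'e list. length l = Suc j}"
        then obtain e1 l' where l: "l = e1 # l'" by (cases l) auto
        show "path_prob p w (w e (xs v)) l * dist (Yl w iv xs (e # l)) (Yl w iv xs l) =
              path_prob p w z l * dist (fw w l z) (fw w l (xs u))"
        proof (cases "path_prob p w z l = 0")
          case False
          then have "p e1 z \<noteq> 0" using l by simp
          then have "iv e1 = u" using vert u by blast
          then show ?thesis using l ive by (simp add: Yl_def z_def)
        qed (simp add: z_def)
      qed simp
      also have "\<dots> \<le> a ^ Suc j * dist z (xs u)" using u xs by (intro contr_sum)
      also have "\<dots> \<le> a ^ Suc j * M2 xs"
        unfolding z_def using a_pos by (intro mult_left_mono M2_ge) auto
      finally show ?thesis by (rule mult_left_mono) (simp add: nn)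
    qed simp
  qed
  also have "\<dots> = a ^ Suc j * M2 xs" by (simp add: sum_distrib_right[symmetric] s1)
  finally show ?thesis .
qed

end


lemma Pouter_mono: "B \<subseteq> B' \<Longrightarrow> Pouter p w xs B \<le> Pouter p w xs B'"
  unfolding Pouter_def by (rule INF_superset_mono) auto

lemma PmN_empty: "PmN p w xs m {} = 0"
  by (simp add: PmN_def)

lemma Alg_empty: "{} \<in> Alg m"
  unfolding Alg_def by (rule sigma_sets.Empty)

lemma geom_tail_sums:
  fixes c r :: real
  assumes "0 \<le> r" "r < 1"
  shows "(\<lambda>k. if n \<le> k then c * r ^ k else 0) sums (c * r ^ n / (1 - r))"
proof -
  let ?f = "\<lambda>k. if n \<le> k then c * r ^ k else 0"
  have "(\<lambda>i. r ^ i) sums (1 / (1 - r))" using assms by (intro geometric_sums) simp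
  then have "(\<lambda>i. (c * r ^ n) * r ^ i) sums ((c * r ^ n) * (1 / (1 - r)))" by (rule sums_mult)
  moreover have "(\<lambda>i. ?f (i + n)) = (\<lambda>i. (c * r ^ n) * r ^ i)"
    by (auto simp: power_add mult_ac)
  ultimately have "(\<lambda>i. ?f (i + n)) sums (c * r ^ n / (1 - r))" by simp
  then have "?f sums (c * r ^ n / (1 - r) + sum ?f {..<n})"
    by (rule iffD1[OF sums_iff_shift[of ?f n]])
  moreover have "sum ?f {..<n} = 0" by simp
  ultimately show ?thesis by simp
qed

lemma Pouter_tail:
  fixes D :: "nat \<Rightarrow> (int \<Rightarrow> 'e) set"
  assumes DA: "\<And>j. D j \<in> Alg (- int j)"
    and DP: "\<And>j. PmN p w xs (- int j) (D j) \<le> ennreal (c * r ^ j)"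
    and c: "0 \<le> c" and r: "0 \<le> r" "r < 1"
  shows "Pouter p w xs (\<Union>j\<in>{n..}. D j) \<le> ennreal (c * r ^ n / (1 - r))"
proof -
  define A where "A k = (if n \<le> k then D k else {})" for k
  let ?f = "\<lambda>k. if n \<le> k then c * r ^ k else 0"
  have A: "\<forall>k. A k \<in> Alg (- int k)" unfolding A_def using DA Alg_empty by auto
  have cov: "(\<Union>j\<in>{n..}. D j) \<subseteq> (\<Union>k. A k)" by (auto simp: A_def)
  have "Pouter p w xs (\<Union>j\<in>{n..}. D j) \<le> (\<Sum>k. PmN p w xs (- int k) (A k))"
    unfolding Pouter_def by (rule INF_lower) (use A cov in blast)
  also have "\<dots> \<le> (\<Sum>k. ennreal (?f k))"
    by (rule suminf_le) (auto simp: A_def PmN_empty DP intro: summableI)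
  also have "\<dots> = ennreal (\<Sum>k. ?f k)"
    using geom_tail_sums[OF r, of n c] c r by (intro suminf_ennreal2) (auto simp: sums_iff)
  also have "(\<Sum>k. ?f k) = c * r ^ n / (1 - r)"
    using geom_tail_sums[OF r, of n c] by (simp add: sums_iff)
  finally show ?thesis .
qed

lemma Pouter_limsup0:
  fixes D :: "nat \<Rightarrow> (int \<Rightarrow> 'e) set"
  assumes DA: "\<And>j. D j \<in> Alg (- int j)"
    and DP: "\<And>j. PmN p w xs (- int j) (D j) \<le> ennreal (c * r ^ j)"
    and c: "0 \<le> c" and r: "0 \<le> r" "r < 1"
  shows "Pouter p w xs (\<Inter>n. \<Union>j\<in>{n..}. D j) = 0"
proof -
  have "Pouter p w xs (\<Inter>n. \<Union>j\<in>{n..}. D j) \<le> 0"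
  proof (rule ennreal_le_epsilon)
    fix e :: real assume e: "0 < e"
    have "(\<lambda>n. c * r ^ n / (1 - r)) \<longlonglongrightarrow> c * 0 / (1 - r)"
      using r by (intro tendsto_intros LIMSEQ_power_zero) auto
    then have "eventually (\<lambda>n. c * r ^ n / (1 - r) < e) sequentially"
      using e by (intro order_tendstoD(2)) auto
    then obtain n where n: "c * r ^ n / (1 - r) < e" by (auto simp: eventually_sequentially)
    have "Pouter p w xs (\<Inter>n. \<Union>j\<in>{n..}. D j) \<le> Pouter p w xs (\<Union>j\<in>{n..}. D j)"
      by (rule Pouter_mono) blast
    also have "\<dots> \<le> ennreal (c * r ^ n / (1 - r))" by (rule Pouter_tail[OF DA DP c r])
    also have "\<dots> \<le> 0 + ennreal e" using n by (simp add: ennreal_leI)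
    finally show "Pouter p w xs (\<Inter>n. \<Union>j\<in>{n..}. D j) \<le> 0 + ennreal e" .
  qed
  then show ?thesis by simp
qed

lemma Pouter_tails_summable:
  fixes D :: "nat \<Rightarrow> (int \<Rightarrow> 'e) set"
  assumes DA: "\<And>j. D j \<in> Alg (- int j)"
    and DP: "\<And>j. PmN p w xs (- int j) (D j) \<le> ennreal (c * r ^ j)"
    and c: "0 \<le> c" and r: "0 \<le> r" "r < 1"
  shows "(\<Sum>k. Pouter p w xs (\<Union>j\<in>{k..}. D j)) < \<infinity>"
proof -
  have s: "summable (\<lambda>k. c / (1 - r) * r ^ k)"
    using r by (intro summable_mult summable_geometric) auto
  have "(\<Sum>k. Pouter p w xs (\<Union>j\<in>{k..}. D j)) \<le> (\<Sum>k. ennreal (c / (1 - r) * r ^ k))"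
    by (rule suminf_le) (use Pouter_tail[OF DA DP c r] in \<open>auto intro: summableI simp: mult_ac\<close>)
  also have "\<dots> = ennreal (\<Sum>k. c / (1 - r) * r ^ k)"
    using s c r by (intro suminf_ennreal2) auto
  also have "\<dots> < \<infinity>" by simp
  finally show ?thesis .
qed

lemma geom_aux: "(r::real) < 1 \<Longrightarrow> X + (Z - X) / (1 - r) = (Z - X * r) / (1 - r)"
proof -
  assume "r < 1"
  then have nz: "1 - r \<noteq> 0" by simp
  have "X + (Z - X) / (1 - r) = (X * (1 - r) + (Z - X)) / (1 - r)"
    using nz by (rule add_divide_eq_iff)
  also have "X * (1 - r) + (Z - X) = Z - X * r" by (simp add: algebra_simps)
  finally show ?thesis .
qed

lemma cg_step:
  fixes f :: "nat \<Rightarrow> 'a::metric_space" and r :: real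
  assumes r: "0 \<le> r" "r < 1" and inc: "\<And>j. k \<le> j \<Longrightarrow> dist (f (Suc j)) (f j) \<le> r ^ j"
    and kn: "k \<le> n"
  shows "dist (f (n + d)) (f n) \<le> (r ^ n - r ^ (n + d)) / (1 - r)"
proof (induction d)
  case 0 then show ?case by simp
next
  case (Suc d)
  have "dist (f (n + Suc d)) (f n) \<le> dist (f (Suc (n + d))) (f (n + d)) + dist (f (n + d)) (f n)"
    using dist_triangle[of "f (Suc (n + d))" "f n" "f (n + d)"] by simp
  also have "\<dots> \<le> r ^ (n + d) + (r ^ n - r ^ (n + d)) / (1 - r)"
    using inc[of "n + d"] kn Suc.IH by (intro add_mono) auto
  also have "\<dots> = (r ^ n - r ^ (n + d) * r) / (1 - r)"
    using r by (intro geom_aux) auto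
  also have "\<dots> = (r ^ n - r ^ (n + Suc d)) / (1 - r)" by (simp add: mult.commute)
  finally show ?case .
qed

lemma cg_bnd:
  fixes f :: "nat \<Rightarrow> 'a::metric_space" and r :: real
  assumes r: "0 \<le> r" "r < 1" and inc: "\<And>j. k \<le> j \<Longrightarrow> dist (f (Suc j)) (f j) \<le> r ^ j"
    and kn: "k \<le> n" and nm: "n \<le> m"
  shows "dist (f m) (f n) \<le> r ^ n / (1 - r)"
proof -
  obtain d where m: "m = n + d" using nm le_Suc_ex by blast
  have "dist (f m) (f n) \<le> (r ^ n - r ^ (n + d)) / (1 - r)"
    unfolding m by (rule cg_step[OF r inc kn])
  also have "\<dots> \<le> r ^ n / (1 - r)" by (rule divide_right_mono) (use r in auto)
  finally show ?thesis .
qed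

lemma conv_geom:
  fixes f :: "nat \<Rightarrow> 'a::complete_space" and r :: real
  assumes r: "0 \<le> r" "r < 1" and inc: "\<And>j. k \<le> j \<Longrightarrow> dist (f (Suc j)) (f j) \<le> r ^ j"
  shows "convergent f" "\<And>n. k \<le> n \<Longrightarrow> dist (lim f) (f n) \<le> r ^ n / (1 - r)"
proof -
  have bnd: "dist (f m) (f n) \<le> r ^ n / (1 - r)" if "k \<le> n" "n \<le> m" for n m
  proof (rule cg_bnd[of r k f n m])
    show "\<And>j. k \<le> j \<Longrightarrow> dist (f (Suc j)) (f j) \<le> r ^ j" by (rule inc)
  qed (use r that in auto)
  have "Cauchy f"
  proof (rule metric_CauchyI)
    fix e :: real assume e: "0 < e"
    have "(\<lambda>n. 2 * (r ^ n / (1 - r))) \<longlonglongrightarrow> 2 * (0 / (1 - r))"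
      using r by (intro tendsto_intros LIMSEQ_power_zero) auto
    then have "eventually (\<lambda>n. 2 * (r ^ n / (1 - r)) < e) sequentially"
      using e by (intro order_tendstoD(2)) auto
    then obtain N0 where N0: "\<And>n. n \<ge> N0 \<Longrightarrow> 2 * (r ^ n / (1 - r)) < e"
      by (auto simp: eventually_sequentially)
    define N where "N = max N0 k"
    show "\<exists>M. \<forall>m\<ge>M. \<forall>n\<ge>M. dist (f m) (f n) < e"
    proof (intro exI allI impI)
      fix m n assume mn: "N \<le> m" "N \<le> n"
      have kN: "k \<le> N" by (simp add: N_def)
      have "dist (f m) (f n) \<le> dist (f m) (f N) + dist (f n) (f N)" by (rule dist_triangle2)
      also have "\<dots> \<le> r ^ N / (1 - r) + r ^ N / (1 - r)"
        using bnd[OF kN mn(1)] bnd[OF kN mn(2)] by (rule add_mono)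
      also have "\<dots> = 2 * (r ^ N / (1 - r))" by simp
      also have "\<dots> < e" using N0[of N] by (simp add: N_def)
      finally show "dist (f m) (f n) < e" .
    qed
  qed
  then show conv: "convergent f" by (simp add: Cauchy_convergent_iff)
  fix n assume n: "k \<le> n"
  have "f \<longlonglongrightarrow> lim f" using conv by (simp add: convergent_LIMSEQ_iff)
  then have "(\<lambda>m. dist (f m) (f n)) \<longlonglongrightarrow> dist (lim f) (f n)"
    by (intro tendsto_intros)
  then show "dist (lim f) (f n) \<le> r ^ n / (1 - r)"
  proof (rule LIMSEQ_le_const2)
    show "\<exists>N. \<forall>m\<ge>N. dist (f m) (f n) \<le> r ^ n / (1 - r)"
      by (rule exI[of _ n]) (use bnd n in auto)
  qed
qed


locale cmsxy =
  fixes iv tv :: "'e::finite \<Rightarrow> 'v::finite" and K :: "'v \<Rightarrow> 'a::complete_space set"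
    and w :: "'e \<Rightarrow> 'a \<Rightarrow> 'a" and p :: "'e \<Rightarrow> 'a \<Rightarrow> real" and a :: real
    and xs ys :: "'v \<Rightarrow> 'a"
  assumes CC: "cms iv tv K w p a"
    and xsK: "\<And>v. xs v \<in> K v" and ysK: "\<And>v. ys v \<in> K v"
begin

sublocale cmsl iv tv K w p a by (rule cmsl.intro) (rule CC)

definition r :: real where "r = sqrt a"

lemma r_pos: "0 < r" unfolding r_def using a_pos by simp
lemma r_lt1: "r < 1" unfolding r_def using a_pos a_lt1 by simp
lemma a_pow: "a ^ j = r ^ j * r ^ j"
proof -
  have "r * r = a" unfolding r_def using a_pos by (simp add: real_sqrt_mult_self)
  then show ?thesis by (metis power_mult_distrib)
qed

definition d1 :: "'e list \<Rightarrow> real" where "d1 l = dist (Yl w iv xs l) (Yl w iv ys l)"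
definition d2 :: "'e list \<Rightarrow> real" where "d2 l = dist (Yl w iv xs l) (Yl w iv xs (tl l))"
definition EE :: "nat \<Rightarrow> 'e list set" where
  "EE j = {l. length l = Suc j \<and> (r ^ j < d1 l \<or> (0 < j \<and> r ^ j < d2 l))}"
definition Bad :: "nat \<Rightarrow> (int \<Rightarrow> 'e) set" where
  "Bad j = {\<sigma>. lst (- int j) (Suc j) \<sigma> \<in> EE j}"
definition M1 :: real where "M1 = (\<Sum>v\<in>UNIV. dist (xs v) (ys v))"
definition cst :: real where "cst = M1 + M2 xs"

lemma M1_nn: "0 \<le> M1" unfolding M1_def by (rule sum_nonneg) simp
lemma cst_nn: "0 \<le> cst" unfolding cst_def using M1_nn M2_nn by simp
lemma M1_ge: "dist (xs v) (ys v) \<le> M1" unfolding M1_def by (rule member_le_sum) auto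

lemma sumD_bound:
  "(\<Sum>l\<in>{l. length l = Suc j}. path_prob p w (xs v) l * (d1 l + (if 0 < j then d2 l else 0)))
     \<le> a ^ j * cst"
proof -
  let ?S = "{l::'e list. length l = Suc j}"
  have aj: "0 \<le> a ^ j" using a_pos by simp
  have s1: "(\<Sum>l\<in>?S. path_prob p w (xs v) l * d1 l) \<le> a ^ j * M1"
  proof -
    have "(\<Sum>l\<in>?S. path_prob p w (xs v) l * d1 l) \<le> a ^ Suc j * dist (xs v) (ys v)"
      unfolding d1_def using xsK ysK by (rule bound1)
    also have "\<dots> \<le> a ^ j * dist (xs v) (ys v)"
    proof (rule mult_right_mono)
      show "a ^ Suc j \<le> a ^ j" using a_pos a_lt1 by (simp add: power_decreasing)
    qed simp
    also have "\<dots> \<le> a ^ j * M1" using M1_ge aj by (rule mult_left_mono)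
    finally show ?thesis .
  qed
  have s2: "(\<Sum>l\<in>?S. path_prob p w (xs v) l * (if 0 < j then d2 l else 0)) \<le> a ^ j * M2 xs"
  proof (cases j)
    case 0 then show ?thesis using M2_nn a_pos by simp
  next
    case (Suc j')
    have "(\<Sum>l\<in>?S. path_prob p w (xs v) l * (if 0 < j then d2 l else 0))
        = (\<Sum>l\<in>{l. length l = Suc (Suc j')}. path_prob p w (xs v) l * d2 l)" using Suc by simp
    also have "\<dots> \<le> a ^ Suc j' * M2 xs" unfolding d2_def using xsK by (rule bound2)
    finally show ?thesis using Suc by simp
  qed
  have "(\<Sum>l\<in>?S. path_prob p w (xs v) l * (d1 l + (if 0 < j then d2 l else 0)))
      = (\<Sum>l\<in>?S. path_prob p w (xs v) l * d1 l) + (\<Sum>l\<in>?S. path_prob p w (xs v) l * (if 0 < j then d2 l else 0))"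
    by (simp only: distrib_left sum.distrib)
  also have "\<dots> \<le> a ^ j * M1 + a ^ j * M2 xs" using s1 s2 by (rule add_mono)
  also have "\<dots> = a ^ j * cst" by (simp add: cst_def distrib_left)
  finally show ?thesis .
qed

lemma EE_sum: "(\<Sum>l\<in>EE j. path_prob p w (xs v) l) \<le> cst * r ^ j"
proof -
  let ?S = "{l::'e list. length l = Suc j}"
  let ?D = "\<lambda>l. d1 l + (if 0 < j then d2 l else 0)"
  have rj: "0 < r ^ j" using r_pos by simp
  have "(\<Sum>l\<in>EE j. path_prob p w (xs v) l) \<le> (\<Sum>l\<in>?S. path_prob p w (xs v) l * ?D l) / r ^ j"
  proof (rule markov_sum)
    show "finite ?S" by (rule finite_len)
    show "EE j \<subseteq> ?S" unfolding EE_def by blast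
    show "\<forall>s\<in>?S. 0 \<le> path_prob p w (xs v) s" using pp_nn by blast
    show "\<forall>s\<in>?S. 0 \<le> ?D s" by (simp add: d1_def d2_def)
    show "0 < r ^ j" by (rule rj)
    show "\<forall>s\<in>EE j. r ^ j \<le> ?D s"
    proof
      fix s assume "s \<in> EE j"
      then have "r ^ j < d1 s \<or> (0 < j \<and> r ^ j < d2 s)" unfolding EE_def by blast
      moreover have "0 \<le> d1 s" "0 \<le> d2 s" by (simp_all add: d1_def d2_def)
      ultimately show "r ^ j \<le> ?D s" by auto
    qed
  qed
  also have "\<dots> \<le> (a ^ j * cst) / r ^ j"
    using sumD_bound[of v j] rj by (intro divide_right_mono) simp_all
  also have "\<dots> = cst * r ^ j" using rj by (simp add: a_pow)
  finally show ?thesis .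
qed

lemma Bad_Alg: "Bad j \<in> Alg (- int j)"
  unfolding Bad_def by (rule ev_Alg) (auto simp: EE_def)

lemma Bad_PmN: "PmN p w xs (- int j) (Bad j) \<le> ennreal (cst * r ^ j)"
  unfolding Bad_def
proof (rule PmN_ev_le)
  show "\<And>v. (\<Sum>es\<in>EE j. path_prob p w (xs v) es) \<le> cst * r ^ j" by (rule EE_sum)
qed (auto simp: EE_def)

lemma notBad:
  assumes "\<sigma> \<notin> Bad j"
  shows "dist (Y w iv xs (- int j) 0 \<sigma>) (Y w iv ys (- int j) 0 \<sigma>) \<le> r ^ j"
    and "0 < j \<Longrightarrow> dist (Y w iv xs (- int j) 0 \<sigma>) (Y w iv xs (- int (j - 1)) 0 \<sigma>) \<le> r ^ j"
proof -
  let ?l = "lst (- int j) (Suc j) \<sigma>"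
  have nb: "\<not> (r ^ j < d1 ?l \<or> (0 < j \<and> r ^ j < d2 ?l))"
    using assms unfolding Bad_def EE_def by simp
  show "dist (Y w iv xs (- int j) 0 \<sigma>) (Y w iv ys (- int j) 0 \<sigma>) \<le> r ^ j"
    using nb unfolding Y_lst d1_def by simp
  assume j: "0 < j"
  have "Y w iv xs (- int (j - 1)) 0 \<sigma> = Yl w iv xs (tl ?l)"
    unfolding Y_lst lst_tl[OF j] ..
  then show "dist (Y w iv xs (- int j) 0 \<sigma>) (Y w iv xs (- int (j - 1)) 0 \<sigma>) \<le> r ^ j"
    using nb j unfolding Y_lst d2_def by simp
qed

end


lemma holder_const:
  fixes r :: real assumes "0 < r" "r < 1"
  shows "2 / (r * (1 - r)) * r ^ Suc n = 2 * (r ^ n / (1 - r))"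
proof -
  have "r \<noteq> 0" "1 - r \<noteq> 0" using assms by auto
  then show ?thesis by (simp add: field_simps)
qed

lemma half_powr:
  fixes r :: real assumes "0 < r" "r < 1"
  defines "\<alpha> \<equiv> ln r / ln (1/2)"
  shows "\<alpha> > 0" "((1/2::real) ^ L) powr \<alpha> = r ^ L"
proof -
  have l1: "ln r < 0" using assms by simp
  have l2: "ln (1/2::real) < 0" by simp
  show "\<alpha> > 0" unfolding \<alpha>_def using l1 l2 by (rule divide_neg_neg)
  have h: "(1/2::real) powr \<alpha> = r"
  proof -
    have "\<alpha> * ln (1/2) = ln r" unfolding \<alpha>_def using l2 by simp
    then show ?thesis using assms by (simp add: powr_def)
  qed
  have "((1/2::real) ^ L) powr \<alpha> = ((1/2) powr real L) powr \<alpha>" by (simp add: powr_realpow)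
  also have "\<dots> = ((1/2) powr \<alpha>) powr real L" by (rule powr_powr_swap)
  also have "\<dots> = r powr real L" by (simp only: h)
  also have "\<dots> = r ^ L" using assms by (simp add: powr_realpow)
  finally show "((1/2::real) ^ L) powr \<alpha> = r ^ L" .
qed

definition dSL :: "(int \<Rightarrow> 'e) \<Rightarrow> (int \<Rightarrow> 'e) \<Rightarrow> nat" where
  "dSL \<sigma> \<tau> = (LEAST k::nat. \<exists>j. \<bar>j\<bar> \<le> int k \<and> \<sigma> j \<noteq> \<tau> j)"

lemma dS_neq: "\<sigma> \<noteq> \<tau> \<Longrightarrow> dS \<sigma> \<tau> = (1/2) ^ dSL \<sigma> \<tau>"
  by (simp add: dS_def dSL_def)

lemma dS_self: "dS \<sigma> \<sigma> = 0" by (simp add: dS_def)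

lemma dS_agree:
  assumes "\<bar>i\<bar> < int (dSL \<sigma> \<tau>)" shows "\<sigma> i = \<tau> i"
proof (rule ccontr)
  assume ne: "\<sigma> i \<noteq> \<tau> i"
  have "\<exists>j. \<bar>j\<bar> \<le> int (nat \<bar>i\<bar>) \<and> \<sigma> j \<noteq> \<tau> j" using ne by (intro exI[of _ i]) simp
  then have "dSL \<sigma> \<tau> \<le> nat \<bar>i\<bar>" unfolding dSL_def by (rule Least_le)
  then show False using assms by linarith
qed

lemma lst_agree:
  assumes "j < dSL \<sigma> \<tau>" shows "lst (- int j) (Suc j) \<sigma> = lst (- int j) (Suc j) \<tau>"
proof (rule nth_equalityI)
  show "length (lst (- int j) (Suc j) \<sigma>) = length (lst (- int j) (Suc j) \<tau>)" by simp
  fix i assume "i < length (lst (- int j) (Suc j) \<sigma>)"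
  then have i: "i < Suc j" by simp
  have "\<bar>- int j + int i\<bar> < int (dSL \<sigma> \<tau>)" using i assms by linarith
  then have "\<sigma> (- int j + int i) = \<tau> (- int j + int i)" by (rule dS_agree)
  then show "lst (- int j) (Suc j) \<sigma> ! i = lst (- int j) (Suc j) \<tau> ! i" using i by (simp add: nth_lst)
qed

lemma Y_agree:
  assumes "j < dSL \<sigma> \<tau>" shows "Y w iv xs (- int j) 0 \<sigma> = Y w iv xs (- int j) 0 \<tau>"
  unfolding Y_lst lst_agree[OF assms] ..

context cmsxy begin

definition Q :: "nat \<Rightarrow> (int \<Rightarrow> 'e) set" where "Q k = {\<sigma>. \<forall>j\<ge>k. \<sigma> \<notin> Bad j}"

lemma conv_out:
  assumes "\<forall>j\<ge>n. \<sigma> \<notin> Bad j"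
  shows "convergent (\<lambda>k. Y w iv xs (- int k) 0 \<sigma>)"
    "\<And>m. n \<le> m \<Longrightarrow> dist (lim (\<lambda>k. Y w iv xs (- int k) 0 \<sigma>)) (Y w iv xs (- int m) 0 \<sigma>) \<le> r ^ m / (1 - r)"
proof -
  have inc: "dist (Y w iv xs (- int (Suc j)) 0 \<sigma>) (Y w iv xs (- int j) 0 \<sigma>) \<le> r ^ j" if "n \<le> j" for j
  proof -
    have "\<sigma> \<notin> Bad (Suc j)" using assms that by simp
    then have "dist (Y w iv xs (- int (Suc j)) 0 \<sigma>) (Y w iv xs (- int (Suc j - 1)) 0 \<sigma>) \<le> r ^ Suc j"
      by (rule notBad(2)) simp
    also have "r ^ Suc j \<le> r ^ j" using r_pos r_lt1 by (intro power_decreasing) auto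
    finally show ?thesis by simp
  qed
  have r0: "0 \<le> r" using r_pos by simp
  show "convergent (\<lambda>k. Y w iv xs (- int k) 0 \<sigma>)"
    by (rule conv_geom(1)[OF r0 r_lt1, of n]) (rule inc)
  fix m assume "n \<le> m"
  then show "dist (lim (\<lambda>k. Y w iv xs (- int k) 0 \<sigma>)) (Y w iv xs (- int m) 0 \<sigma>) \<le> r ^ m / (1 - r)"
    by (rule conv_geom(2)[OF r0 r_lt1, of n, rotated]) (rule inc)
qed

lemma dist_out:
  assumes "\<forall>j\<ge>n. \<sigma> \<notin> Bad j"
  shows "(\<lambda>k. dist (Y w iv xs (- int k) 0 \<sigma>) (Y w iv ys (- int k) 0 \<sigma>)) \<longlonglongrightarrow> 0"
proof (rule Lim_null_comparison)
  show "\<forall>\<^sub>F k in sequentially. norm (dist (Y w iv xs (- int k) 0 \<sigma>) (Y w iv ys (- int k) 0 \<sigma>)) \<le> r ^ k"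
    unfolding eventually_sequentially
  proof (intro exI allI impI)
    fix k assume "n \<le> k"
    then have "\<sigma> \<notin> Bad k" using assms by simp
    then show "norm (dist (Y w iv xs (- int k) 0 \<sigma>) (Y w iv ys (- int k) 0 \<sigma>)) \<le> r ^ k"
      using notBad(1) by simp
  qed
  show "(\<lambda>k. r ^ k) \<longlonglongrightarrow> 0" using r_pos r_lt1 by (intro LIMSEQ_power_zero) auto
qed

lemma ys_out:
  assumes "\<forall>j\<ge>n. \<sigma> \<notin> Bad j"
  shows "convergent (\<lambda>k. Y w iv ys (- int k) 0 \<sigma>)"
    "lim (\<lambda>k. Y w iv xs (- int k) 0 \<sigma>) = lim (\<lambda>k. Y w iv ys (- int k) 0 \<sigma>)"
proof -
  let ?f = "\<lambda>k. Y w iv xs (- int k) 0 \<sigma>"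
  let ?g = "\<lambda>k. Y w iv ys (- int k) 0 \<sigma>"
  have "?f \<longlonglongrightarrow> lim ?f" using conv_out(1)[OF assms] by (rule convergent_LIMSEQ_iff[THEN iffD1])
  then have d1: "(\<lambda>k. dist (?f k) (lim ?f)) \<longlonglongrightarrow> 0" by (rule tendsto_dist_iff[THEN iffD1])
  have d2: "(\<lambda>k. dist (?f k) (?g k)) \<longlonglongrightarrow> 0" by (rule dist_out[OF assms])
  have "(\<lambda>k. dist (?g k) (lim ?f)) \<longlonglongrightarrow> 0"
  proof (rule Lim_null_comparison)
    show "\<forall>\<^sub>F k in sequentially. norm (dist (?g k) (lim ?f)) \<le> dist (?f k) (?g k) + dist (?f k) (lim ?f)"
    proof (rule always_eventually, rule allI)
      fix k
      have "dist (?g k) (lim ?f) \<le> dist (?g k) (?f k) + dist (?f k) (lim ?f)" by (rule dist_triangle)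
      then show "norm (dist (?g k) (lim ?f)) \<le> dist (?f k) (?g k) + dist (?f k) (lim ?f)"
        by (simp add: dist_commute)
    qed
    show "(\<lambda>k. dist (?f k) (?g k) + dist (?f k) (lim ?f)) \<longlonglongrightarrow> 0"
      using tendsto_add[OF d2 d1] by simp
  qed
  then have gl: "?g \<longlonglongrightarrow> lim ?f" by (rule tendsto_dist_iff[THEN iffD2])
  then show "convergent ?g" by (rule convergentI)
  show "lim ?f = lim ?g" using gl by (rule limI[symmetric])
qed

end


context cmsxy begin

lemma Q_closed: "dS_closed (Q k)"
  unfolding dS_closed_def
proof (intro allI impI)
  fix \<sigma> :: "int \<Rightarrow> 'e"
  assume h: "\<forall>\<epsilon>>0. \<exists>\<tau>\<in>Q k. dS \<sigma> \<tau> < \<epsilon>"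
  show "\<sigma> \<in> Q k" unfolding Q_def
  proof (intro CollectI allI impI)
    fix j assume jk: "k \<le> j"
    have "(0::real) < (1/2) ^ j" by simp
    then obtain \<tau> where \<tau>: "\<tau> \<in> Q k" "dS \<sigma> \<tau> < (1/2) ^ j" using h by blast
    have \<tau>j: "\<tau> \<notin> Bad j" using \<tau>(1) jk unfolding Q_def by blast
    show "\<sigma> \<notin> Bad j"
    proof (cases "\<sigma> = \<tau>")
      case True then show ?thesis using \<tau>j by simp
    next
      case False
      have lt: "(1/2::real) ^ dSL \<sigma> \<tau> < (1/2) ^ j" using \<tau>(2) dS_neq[OF False] by simp
      have iff: "((1/2::real) ^ dSL \<sigma> \<tau> < (1/2) ^ j) = (j < dSL \<sigma> \<tau>)"
        by (rule power_strict_decreasing_iff) auto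
      have "j < dSL \<sigma> \<tau>" using lt iff by blast
      then have "lst (- int j) (Suc j) \<sigma> = lst (- int j) (Suc j) \<tau>" by (rule lst_agree)
      then show ?thesis using \<tau>j unfolding Bad_def by simp
    qed
  qed
qed

lemma Q_mono: "Q k \<subseteq> Q (Suc k)" unfolding Q_def by auto

lemma Q_compl: "UNIV - Q k = (\<Union>j\<in>{k..}. Bad j)" unfolding Q_def by auto

definition \<alpha> :: real where "\<alpha> = ln r / ln (1/2)"
definition CH :: real where "CH = 2 / (r * (1 - r))"

lemma holder:
  assumes \<sigma>: "\<sigma> \<in> Q k" and \<sigma>': "\<sigma>' \<in> Q k" and d: "dS \<sigma> \<sigma>' \<le> (1/2) ^ Suc k"
  shows "dist (lim (\<lambda>n::nat. Y w iv xs (- int n) 0 \<sigma>)) (lim (\<lambda>n::nat. Y w iv xs (- int n) 0 \<sigma>'))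
          \<le> CH * dS \<sigma> \<sigma>' powr \<alpha>"
proof (cases "\<sigma> = \<sigma>'")
  case True then show ?thesis by (simp add: dS_self)
next
  case False
  define L where "L = dSL \<sigma> \<sigma>'"
  have dSe: "dS \<sigma> \<sigma>' = (1/2) ^ L" unfolding L_def using False by (rule dS_neq)
  have le: "(1/2::real) ^ L \<le> (1/2) ^ Suc k" using d dSe by simp
  have iff: "((1/2::real) ^ L \<le> (1/2) ^ Suc k) = (Suc k \<le> L)"
    by (rule power_decreasing_iff) auto
  have "Suc k \<le> L" using le iff by blast
  then obtain n where L: "L = Suc n" and kn: "k \<le> n" by (cases L) auto
  have agree: "Y w iv xs (- int n) 0 \<sigma> = Y w iv xs (- int n) 0 \<sigma>'"
    using L unfolding L_def by (intro Y_agree) simp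
  have q1: "\<forall>j\<ge>k. \<sigma> \<notin> Bad j" using \<sigma> unfolding Q_def by blast
  have q2: "\<forall>j\<ge>k. \<sigma>' \<notin> Bad j" using \<sigma>' unfolding Q_def by blast
  have b1: "dist (lim (\<lambda>n::nat. Y w iv xs (- int n) 0 \<sigma>)) (Y w iv xs (- int n) 0 \<sigma>) \<le> r ^ n / (1 - r)"
    using kn by (rule conv_out(2)[OF q1])
  have b2: "dist (lim (\<lambda>n::nat. Y w iv xs (- int n) 0 \<sigma>')) (Y w iv xs (- int n) 0 \<sigma>) \<le> r ^ n / (1 - r)"
    using conv_out(2)[OF q2 kn] agree by simp
  have "dist (lim (\<lambda>n::nat. Y w iv xs (- int n) 0 \<sigma>)) (lim (\<lambda>n::nat. Y w iv xs (- int n) 0 \<sigma>'))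
      \<le> dist (lim (\<lambda>n::nat. Y w iv xs (- int n) 0 \<sigma>)) (Y w iv xs (- int n) 0 \<sigma>)
        + dist (lim (\<lambda>n::nat. Y w iv xs (- int n) 0 \<sigma>')) (Y w iv xs (- int n) 0 \<sigma>)"
    by (rule dist_triangle2)
  also have "\<dots> \<le> r ^ n / (1 - r) + r ^ n / (1 - r)" using b1 b2 by (rule add_mono)
  also have "\<dots> = 2 * (r ^ n / (1 - r))" by simp
  also have "\<dots> = CH * r ^ Suc n" unfolding CH_def using r_pos r_lt1 by (rule holder_const[symmetric])
  also have "r ^ Suc n = dS \<sigma> \<sigma>' powr \<alpha>"
    unfolding dSe L \<alpha>_def using r_pos r_lt1 by (rule half_powr(2)[symmetric])
  finally show ?thesis .
qed

lemma main:
  shows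
    "(\<exists>Z. Pouter p w xs Z = 0 \<and> (\<forall>\<sigma>. \<sigma> \<notin> Z \<longrightarrow>
        (\<lambda>k::nat. dist (Y w iv xs (- int k) 0 \<sigma>) (Y w iv ys (- int k) 0 \<sigma>)) \<longlonglongrightarrow> 0))
   \<and> (\<exists>Z. Pouter p w xs Z = 0 \<and> (\<forall>\<sigma>. \<sigma> \<notin> Z \<longrightarrow>
        convergent (\<lambda>k::nat. Y w iv xs (- int k) 0 \<sigma>)))
   \<and> (\<exists>Z. Pouter p w xs Z = 0 \<and> (\<forall>\<sigma>. \<sigma> \<notin> Z \<longrightarrow>
        convergent (\<lambda>k::nat. Y w iv xs (- int k) 0 \<sigma>) \<and>
        convergent (\<lambda>k::nat. Y w iv ys (- int k) 0 \<sigma>) \<and>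
        lim (\<lambda>k::nat. Y w iv xs (- int k) 0 \<sigma>) = lim (\<lambda>k::nat. Y w iv ys (- int k) 0 \<sigma>)))
   \<and> (\<exists>Q :: nat \<Rightarrow> (int \<Rightarrow> 'e) set. \<exists>\<alpha> C :: real.
        (\<forall>k. dS_closed (Q k)) \<and> (\<forall>k. Q k \<subseteq> Q (Suc k)) \<and>
        (\<Sum>k. Pouter p w xs (UNIV - Q k)) < \<infinity> \<and> \<alpha> > 0 \<and> C > 0 \<and>
        (\<forall>k. \<exists>\<delta>>0. (\<forall>\<sigma>\<in>Q k. convergent (\<lambda>n::nat. Y w iv xs (- int n) 0 \<sigma>)) \<and>
           (\<forall>\<sigma>\<in>Q k. \<forall>\<sigma>'\<in>Q k. dS \<sigma> \<sigma>' \<le> \<delta> \<longrightarrow>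
              dist (lim (\<lambda>n::nat. Y w iv xs (- int n) 0 \<sigma>)) (lim (\<lambda>n::nat. Y w iv xs (- int n) 0 \<sigma>'))
                \<le> C * dS \<sigma> \<sigma>' powr \<alpha>)))"
proof -
  have r0: "0 \<le> r" using r_pos by simp
  define Z where "Z = (\<Inter>n. \<Union>j\<in>{n..}. Bad j)"
  have PZ: "Pouter p w xs Z = 0" unfolding Z_def
    by (rule Pouter_limsup0[OF Bad_Alg Bad_PmN cst_nn r0 r_lt1])
  have out: "\<exists>n. \<forall>j\<ge>n. \<sigma> \<notin> Bad j" if "\<sigma> \<notin> Z" for \<sigma>
    using that unfolding Z_def by auto
  have P1: "\<exists>Z. Pouter p w xs Z = 0 \<and> (\<forall>\<sigma>. \<sigma> \<notin> Z \<longrightarrow>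
        (\<lambda>k::nat. dist (Y w iv xs (- int k) 0 \<sigma>) (Y w iv ys (- int k) 0 \<sigma>)) \<longlonglongrightarrow> 0)"
    using PZ out dist_out by blast
  have P2: "\<exists>Z. Pouter p w xs Z = 0 \<and> (\<forall>\<sigma>. \<sigma> \<notin> Z \<longrightarrow>
        convergent (\<lambda>k::nat. Y w iv xs (- int k) 0 \<sigma>))"
    using PZ out conv_out(1) by blast
  have P3: "\<exists>Z. Pouter p w xs Z = 0 \<and> (\<forall>\<sigma>. \<sigma> \<notin> Z \<longrightarrow>
        convergent (\<lambda>k::nat. Y w iv xs (- int k) 0 \<sigma>) \<and>
        convergent (\<lambda>k::nat. Y w iv ys (- int k) 0 \<sigma>) \<and>
        lim (\<lambda>k::nat. Y w iv xs (- int k) 0 \<sigma>) = lim (\<lambda>k::nat. Y w iv ys (- int k) 0 \<sigma>))"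
    using PZ out conv_out(1) ys_out by blast
  have sumQ: "(\<Sum>k. Pouter p w xs (UNIV - Q k)) < \<infinity>"
    unfolding Q_compl by (rule Pouter_tails_summable[OF Bad_Alg Bad_PmN cst_nn r0 r_lt1])
  have apos: "\<alpha> > 0" unfolding \<alpha>_def using r_pos r_lt1 by (rule half_powr(1))
  have Cpos: "CH > 0" unfolding CH_def using r_pos r_lt1 by simp
  have H: "\<forall>k. \<exists>\<delta>>0. (\<forall>\<sigma>\<in>Q k. convergent (\<lambda>n::nat. Y w iv xs (- int n) 0 \<sigma>)) \<and>
           (\<forall>\<sigma>\<in>Q k. \<forall>\<sigma>'\<in>Q k. dS \<sigma> \<sigma>' \<le> \<delta> \<longrightarrow>
              dist (lim (\<lambda>n::nat. Y w iv xs (- int n) 0 \<sigma>)) (lim (\<lambda>n::nat. Y w iv xs (- int n) 0 \<sigma>'))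
                \<le> CH * dS \<sigma> \<sigma>' powr \<alpha>)"
  proof
    fix k
    show "\<exists>\<delta>>0. (\<forall>\<sigma>\<in>Q k. convergent (\<lambda>n::nat. Y w iv xs (- int n) 0 \<sigma>)) \<and>
           (\<forall>\<sigma>\<in>Q k. \<forall>\<sigma>'\<in>Q k. dS \<sigma> \<sigma>' \<le> \<delta> \<longrightarrow>
              dist (lim (\<lambda>n::nat. Y w iv xs (- int n) 0 \<sigma>)) (lim (\<lambda>n::nat. Y w iv xs (- int n) 0 \<sigma>'))
                \<le> CH * dS \<sigma> \<sigma>' powr \<alpha>)"
    proof (intro exI[of _ "(1/2) ^ Suc k"] conjI ballI impI)
      show "(0::real) < (1/2) ^ Suc k" by simp
      fix \<sigma> assume "\<sigma> \<in> Q k"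
      then have "\<forall>j\<ge>k. \<sigma> \<notin> Bad j" unfolding Q_def by blast
      then show "convergent (\<lambda>n::nat. Y w iv xs (- int n) 0 \<sigma>)" by (rule conv_out(1))
    next
      fix \<sigma> \<sigma>' assume "\<sigma> \<in> Q k" "\<sigma>' \<in> Q k" "dS \<sigma> \<sigma>' \<le> (1/2) ^ Suc k"
      then show "dist (lim (\<lambda>n::nat. Y w iv xs (- int n) 0 \<sigma>)) (lim (\<lambda>n::nat. Y w iv xs (- int n) 0 \<sigma>'))
                \<le> CH * dS \<sigma> \<sigma>' powr \<alpha>" by (rule holder)
    qed
  qed
  have P4: "\<exists>Q :: nat \<Rightarrow> (int \<Rightarrow> 'e) set. \<exists>\<alpha> C :: real.
        (\<forall>k. dS_closed (Q k)) \<and> (\<forall>k. Q k \<subseteq> Q (Suc k)) \<and>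
        (\<Sum>k. Pouter p w xs (UNIV - Q k)) < \<infinity> \<and> \<alpha> > 0 \<and> C > 0 \<and>
        (\<forall>k. \<exists>\<delta>>0. (\<forall>\<sigma>\<in>Q k. convergent (\<lambda>n::nat. Y w iv xs (- int n) 0 \<sigma>)) \<and>
           (\<forall>\<sigma>\<in>Q k. \<forall>\<sigma>'\<in>Q k. dS \<sigma> \<sigma>' \<le> \<delta> \<longrightarrow>
              dist (lim (\<lambda>n::nat. Y w iv xs (- int n) 0 \<sigma>)) (lim (\<lambda>n::nat. Y w iv xs (- int n) 0 \<sigma>'))
                \<le> C * dS \<sigma> \<sigma>' powr \<alpha>))"
    by (intro exI[of _ Q] exI[of _ \<alpha>] exI[of _ CH] conjI allI Q_closed Q_mono sumQ apos Cpos H)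
  show ?thesis using P1 P2 P3 P4 by (intro conjI)
qed

end

theorem lemma3:
  fixes iv tv :: "'e::finite \<Rightarrow> 'v::finite"
    and K :: "'v \<Rightarrow> 'a::complete_space set"
    and w :: "'e \<Rightarrow> 'a \<Rightarrow> 'a" and p :: "'e \<Rightarrow> 'a \<Rightarrow> real" and a :: real
    and xs ys :: "'v \<Rightarrow> 'a"
  assumes "cms iv tv K w p a"
    and "\<And>v. xs v \<in> K v" and "\<And>v. ys v \<in> K v"
  shows
    "(\<exists>Z. Pouter p w xs Z = 0 \<and> (\<forall>\<sigma>. \<sigma> \<notin> Z \<longrightarrow>
        (\<lambda>k::nat. dist (Y w iv xs (- int k) 0 \<sigma>) (Y w iv ys (- int k) 0 \<sigma>)) \<longlonglongrightarrow> 0))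
   \<and> (\<exists>Z. Pouter p w xs Z = 0 \<and> (\<forall>\<sigma>. \<sigma> \<notin> Z \<longrightarrow>
        convergent (\<lambda>k::nat. Y w iv xs (- int k) 0 \<sigma>)))
   \<and> (\<exists>Z. Pouter p w xs Z = 0 \<and> (\<forall>\<sigma>. \<sigma> \<notin> Z \<longrightarrow>
        convergent (\<lambda>k::nat. Y w iv xs (- int k) 0 \<sigma>) \<and>
        convergent (\<lambda>k::nat. Y w iv ys (- int k) 0 \<sigma>) \<and>
        lim (\<lambda>k::nat. Y w iv xs (- int k) 0 \<sigma>) = lim (\<lambda>k::nat. Y w iv ys (- int k) 0 \<sigma>)))
   \<and> (\<exists>Q :: nat \<Rightarrow> (int \<Rightarrow> 'e) set. \<exists>\<alpha> C :: real.
        (\<forall>k. dS_closed (Q k)) \<and> (\<forall>k. Q k \<subseteq> Q (Suc k)) \<and>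
        (\<Sum>k. Pouter p w xs (UNIV - Q k)) < \<infinity> \<and> \<alpha> > 0 \<and> C > 0 \<and>
        (\<forall>k. \<exists>\<delta>>0. (\<forall>\<sigma>\<in>Q k. convergent (\<lambda>n::nat. Y w iv xs (- int n) 0 \<sigma>)) \<and>
           (\<forall>\<sigma>\<in>Q k. \<forall>\<sigma>'\<in>Q k. dS \<sigma> \<sigma>' \<le> \<delta> \<longrightarrow>
              dist (lim (\<lambda>n::nat. Y w iv xs (- int n) 0 \<sigma>)) (lim (\<lambda>n::nat. Y w iv xs (- int n) 0 \<sigma>'))
                \<le> C * dS \<sigma> \<sigma>' powr \<alpha>)))"
proof -
  interpret cmsxy iv tv K w p a xs ys
    by (rule cmsxy.intro) (use assms in auto)
  show ?thesis by (rule main)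
qed


end
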